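(* Let $\sum_{n=1}^{\infty}x_n$ be a divergent series of positive real terms with $\lim_{n\to\infty}x_n=0$, and let $S=\{\sum_{n=1}^{\infty}(x_n-x_{\sigma(n)}) : \sigma\in S_\infty,\ \text{the series converges}\}$. Then either $S=\mathbb{R}$ or $S$ is a halfline bounded from below, i.e. there is $c\in\mathbb{R}$ with $S=[c,\infty)$ or $S=(c,\infty)$.
   Context: $S_\infty$ denotes the set of all permutations of $\mathbb{N}$. *)

theory Defs
  imports Complex_Main
begin

end

theory Submission
  imports Defs
begin

locale lemA =
  fixes v :: "nat \<Rightarrow> real" and d :: real
  assumes vpos: "\<And>n. v n > 0" and vlim: "v \<longlonglongrightarrow> 0"
    and vdiv: "\<not> summable v" and dpos: "d > 0"
begin

lemma unbounded: "\<exists>n. sum v {..<n} > B"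
proof (rule ccontr)
  assume "\<not> ?thesis"
  hence "\<And>n. sum v {..<n} \<le> B" by (simp add: not_less)
  hence "summable v" using vpos by (intro summableI_nonneg_bounded[of v B]) (auto intro: less_imp_le)
  thus False using vdiv by simp
qed

lemma small_eventually: assumes "e > 0" shows "\<exists>K. \<forall>n\<ge>K. v n \<le> e"
proof -
  from vlim assms have "eventually (\<lambda>n. dist (v n) 0 < e) sequentially"
    by (simp add: tendsto_iff)
  then obtain K where "\<forall>n\<ge>K. dist (v n) 0 < e" by (auto simp: eventually_sequentially)
  thus ?thesis by (intro exI[of _ K]) auto
qed

lemma sum_mono_ub: "m \<le> n \<Longrightarrow> sum v {p<..<m} \<le> sum v {p<..<n}"
  by (rule sum_mono2) (auto intro: less_imp_le vpos)

lemma sum_mono_ub0: "m \<le> n \<Longrightarrow> sum v {..<m} \<le> sum v {..<n}"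
  by (rule sum_mono2) (auto intro: less_imp_le vpos)

lemma ex_next: assumes "e > 0" shows "\<exists>q. p < q \<and> d \<le> sum v {p<..<q} \<and> v q \<le> e"
proof -
  obtain Q where Q: "sum v {..<Q} > d + sum v {..p}" using unbounded by blast
  obtain K where K: "\<forall>n\<ge>K. v n \<le> e" using small_eventually assms by blast
  have "Q > p"
  proof (rule ccontr)
    assume "\<not> Q > p"
    hence "{..<Q} \<subseteq> {..p}" by auto
    hence "sum v {..<Q} \<le> sum v {..p}" by (intro sum_mono2) (auto intro: less_imp_le vpos)
    thus False using Q dpos by linarith
  qed
  have split: "sum v {..<Q} = sum v {..p} + sum v {p<..<Q}"
  proof -
    have "{..<Q} = {..p} \<union> {p<..<Q}" using \<open>Q > p\<close> by auto
    thus ?thesis by (simp add: sum.union_disjoint ivl_disj_int)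
  qed
  let ?q = "max Q K"
  have "sum v {p<..<Q} \<le> sum v {p<..<?q}" by (rule sum_mono_ub) simp
  thus ?thesis using K Q split \<open>Q > p\<close> by (intro exI[of _ ?q]) auto
qed

lemma ex_first: "\<exists>q. d \<le> sum v {..<q} \<and> v q \<le> 1"
proof -
  obtain Q where Q: "sum v {..<Q} > d" using unbounded by blast
  obtain K where K: "\<forall>n\<ge>K. v n \<le> 1" using small_eventually by fastforce
  have "sum v {..<Q} \<le> sum v {..<max Q K}" by (rule sum_mono_ub0) simp
  thus ?thesis using Q K by (intro exI[of _ "max Q K"]) auto
qed

primrec t :: "nat \<Rightarrow> nat" where
  "t 0 = (LEAST q. d \<le> sum v {..<q} \<and> v q \<le> 1)"
| "t (Suc k) = (LEAST q. t k < q \<and> d \<le> sum v {t k<..<q} \<and> v q \<le> (1/2)^(Suc k))"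

lemma t0: "d \<le> sum v {..<t 0} \<and> v (t 0) \<le> (1/2)^0"
  using LeastI_ex[OF ex_first] by simp

lemma tSuc: "t k < t (Suc k) \<and> d \<le> sum v {t k<..<t (Suc k)} \<and> v (t (Suc k)) \<le> (1/2)^(Suc k)"
proof -
  have "(1/2::real)^(Suc k) > 0" by simp
  from LeastI_ex[OF ex_next[OF this, of "t k"]] show ?thesis by simp
qed

declare t.simps[simp del]

lemma t_mono: "strict_mono t"
  using tSuc by (intro strict_mono_Suc_iff[THEN iffD2]) blast

lemma t_small: "v (t k) \<le> (1/2)^k"
  using t0 tSuc by (cases k) auto

lemma t_less_iff: "t i < t j \<longleftrightarrow> i < j"
  using t_mono by (simp add: strict_mono_less)

lemma t_le_iff: "t i \<le> t j \<longleftrightarrow> i \<le> j"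
  using t_mono by (simp add: strict_mono_less_eq)

lemma t_inj: "t i = t j \<longleftrightarrow> i = j"
  using t_le_iff by (metis order.eq_iff)

lemma t_ge: "k \<le> t k"
  using t_mono by (rule seq_suble)

definition cT :: "nat \<Rightarrow> nat" where "cT N = (LEAST k. N \<le> t k)"

lemma cT_iff: "t k < N \<longleftrightarrow> k < cT N"
proof -
  have ex: "\<exists>k. N \<le> t k" using t_ge by blast
  have L: "N \<le> t (cT N)" unfolding cT_def using LeastI_ex[OF ex] .
  show ?thesis
  proof
    assume "t k < N"
    show "k < cT N"
    proof (rule ccontr)
      assume "\<not> k < cT N"
      hence "t (cT N) \<le> t k" using t_le_iff by simp
      thus False using L \<open>t k < N\<close> by simp
    qed
  next
    assume "k < cT N"
    hence "\<not> N \<le> t k" unfolding cT_def by (rule not_less_Least)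
    thus "t k < N" by simp
  qed
qed

lemma nat_eqI_less: "(\<And>k::nat. k < a \<longleftrightarrow> k < b) \<Longrightarrow> a = b"
  by (metis less_irrefl nat_neq_iff)

lemma cT_t: "cT (t j) = j"
  by (rule nat_eqI_less) (simp add: cT_iff[symmetric] t_less_iff)

lemma cT_Suc_t: "cT (Suc (t j)) = Suc j"
  by (rule nat_eqI_less) (metis cT_iff less_Suc_eq_le t_le_iff)

lemma cT_Suc_nt: "N \<notin> range t \<Longrightarrow> cT (Suc N) = cT N"
  by (rule nat_eqI_less) (metis cT_iff less_Suc_eq rangeI)

lemma cT_Suc: "cT (Suc N) = (if N \<in> range t then Suc (cT N) else cT N)"
  using cT_Suc_nt cT_Suc_t cT_t by auto

lemma cT_0: "cT 0 = 0"
  using cT_iff by (metis not_less0 not_gr_zero)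

lemma cT_mono: "N \<le> M \<Longrightarrow> cT N \<le> cT M"
  by (metis cT_iff le_trans not_le order.strict_trans1 less_imp_le)

primrec L :: "nat \<Rightarrow> nat list" where
  "L 0 = []"
| "L (Suc N) = (if N \<notin> range t \<and> (\<Sum>k\<in>{cT N..<length (L N)}. v (L N ! k)) < d
                then L N @ [N] else L N)"

definition s :: "nat \<Rightarrow> real" where
  "s N = (\<Sum>k\<in>{cT N..<length (L N)}. v (L N ! k))"

definition add :: "nat \<Rightarrow> bool" where
  "add N \<longleftrightarrow> N \<notin> range t \<and> s N < d"

lemma L_Suc: "L (Suc N) = (if add N then L N @ [N] else L N)"
  by (simp add: add_def s_def)

declare L.simps(2)[simp del]

lemma s_nonneg: "0 \<le> s N"
  unfolding s_def by (rule sum_nonneg) (simp add: less_imp_le vpos)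

lemma s_pos_nonempty: "0 < s N \<Longrightarrow> cT N < length (L N)"
  unfolding s_def by (cases "cT N < length (L N)") auto

lemma L_prefix: "N \<le> M \<Longrightarrow> \<exists>ys. L M = L N @ ys \<and> (\<forall>y\<in>set ys. N \<le> y)"
proof (induction M rule: dec_induct)
  case base then show ?case by simp
next
  case (step m)
  then obtain ys where ys: "L m = L N @ ys" "\<forall>y\<in>set ys. N \<le> y" by blast
  show ?case
    using ys step.hyps by (auto simp: L_Suc intro!: exI[of _ "ys @ [m]"])
qed

lemma L_lt: "x \<in> set (L N) \<Longrightarrow> x < N"
  by (induction N) (auto simp: L_Suc split: if_splits)

lemma L_notT: "x \<in> set (L N) \<Longrightarrow> x \<notin> range t"
  by (induction N) (auto simp: L_Suc add_def split: if_splits)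

lemma L_sorted: "sorted_wrt (<) (L N)"
  by (induction N) (auto simp: L_Suc sorted_wrt_append dest: L_lt)

lemma len_mono: "N \<le> M \<Longrightarrow> length (L N) \<le> length (L M)"
  using L_prefix by fastforce

lemma L_nth_stable: "N \<le> M \<Longrightarrow> k < length (L N) \<Longrightarrow> L M ! k = L N ! k"
  using L_prefix by (fastforce simp: nth_append)

lemma L_nth_late: "N \<le> M \<Longrightarrow> length (L N) \<le> k \<Longrightarrow> k < length (L M) \<Longrightarrow> N \<le> L M ! k"
proof -
  assume a: "N \<le> M" "length (L N) \<le> k" "k < length (L M)"
  then obtain ys where ys: "L M = L N @ ys" "\<forall>y\<in>set ys. N \<le> y" using L_prefix by blast
  have "L M ! k = ys ! (k - length (L N))" using a ys by (simp add: nth_append)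
  moreover have "k - length (L N) < length ys" using a ys by auto
  ultimately show ?thesis using ys by auto
qed

lemma s_Suc_add: assumes "add N" "cT N \<le> length (L N)" shows "s (Suc N) = s N + v N"
proof -
  have nt: "N \<notin> range t" using assms(1) by (simp add: add_def)
  have "s (Suc N) = (\<Sum>k\<in>{cT N..<Suc (length (L N))}. v ((L N @ [N]) ! k))"
    using assms by (simp add: s_def L_Suc cT_Suc_nt[OF nt])
  also have "\<dots> = (\<Sum>k\<in>{cT N..<length (L N)}. v ((L N @ [N]) ! k)) + v N"
    using assms(2) by (simp add: nth_append)
  also have "(\<Sum>k\<in>{cT N..<length (L N)}. v ((L N @ [N]) ! k)) = s N"
    unfolding s_def by (rule sum.cong) (auto simp: nth_append)
  finally show ?thesis .
qed

lemma s_Suc_noadd: assumes "\<not> add N" "N \<notin> range t" shows "s (Suc N) = s N"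
  using assms by (simp add: s_def L_Suc cT_Suc_nt)

lemma s_Suc_T: assumes "N \<in> range t" "cT N < length (L N)"
  shows "s (Suc N) = s N - v (L N ! cT N)"
proof -
  have na: "\<not> add N" using assms by (simp add: add_def)
  have "s N = v (L N ! cT N) + (\<Sum>k\<in>{Suc (cT N)..<length (L N)}. v (L N ! k))"
    unfolding s_def using assms(2) by (rule sum.atLeast_Suc_lessThan)
  moreover have "s (Suc N) = (\<Sum>k\<in>{Suc (cT N)..<length (L N)}. v (L N ! k))"
    using assms na by (simp add: s_def L_Suc cT_Suc)
  ultimately show ?thesis by simp
qed

lemma gap:
  assumes "p \<le> q" "\<And>n. p \<le> n \<Longrightarrow> n < q \<Longrightarrow> n \<notin> range t" "cT p \<le> length (L p)"
    and "p \<le> n" "n \<le> q"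
  shows "cT n = cT p \<and> length (L p) \<le> length (L n) \<and> min d (s p + sum v {p..<n}) \<le> s n"
  using assms(4,5)
proof (induction n rule: dec_induct)
  case base then show ?case by simp
next
  case (step n)
  have nt: "n \<notin> range t" using assms(2) step by auto
  have cTn: "cT (Suc n) = cT p" using step cT_Suc_nt[OF nt] by simp
  have lenle: "length (L n) \<le> length (L (Suc n))" by (rule len_mono) simp
  have cle: "cT n \<le> length (L n)" using step assms(3) by simp
  show ?case
  proof (cases "add n")
    case True
    hence sl: "s n < d" by (simp add: add_def)
    have "s (Suc n) = s n + v n" by (rule s_Suc_add[OF True cle])
    moreover have "s p + sum v {p..<n} \<le> s n" using step sl by (auto simp: min_def split: if_splits)
    moreover have "sum v {p..<Suc n} = sum v {p..<n} + v n" using step by simp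
    ultimately show ?thesis using cTn lenle step by (auto simp: min_def)
  next
    case False
    hence "s (Suc n) = s n" by (rule s_Suc_noadd[OF _ nt])
    moreover from False nt have "d \<le> s n" by (simp add: add_def)
    ultimately show ?thesis using cTn lenle step by (auto simp: min_def)
  qed
qed

lemma inv_t: "k < length (L (t k)) \<and> d \<le> s (t k)"
proof (induction k)
  case 0
  have nt: "\<And>n. 0 \<le> n \<Longrightarrow> n < t 0 \<Longrightarrow> n \<notin> range t"
    using t_less_iff by auto
  have "min d (s 0 + sum v {0..<t 0}) \<le> s (t 0)"
    using gap[of 0 "t 0" "t 0", OF _ nt] by (simp add: cT_0)
  moreover have "s 0 = 0" by (simp add: s_def)
  moreover have "d \<le> sum v {0..<t 0}" using t0 by (simp add: atLeast0LessThan)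
  ultimately have ds: "d \<le> s (t 0)" by (simp add: min_def split: if_splits)
  hence "cT (t 0) < length (L (t 0))" using dpos by (intro s_pos_nonempty) simp
  thus ?case using ds cT_t by simp
next
  case (Suc k)
  let ?p = "Suc (t k)"
  have pq: "?p \<le> t (Suc k)" using tSuc by (simp add: Suc_le_eq)
  have nt: "\<And>n. ?p \<le> n \<Longrightarrow> n < t (Suc k) \<Longrightarrow> n \<notin> range t"
    by (auto simp: t_less_iff) (metis Suc_le_lessD not_less_eq t_less_iff)
  have lenp: "length (L ?p) = length (L (t k))"
    by (simp add: L_Suc add_def)
  have cTp: "cT ?p = Suc k" by (rule cT_Suc_t)
  have "cT ?p \<le> length (L ?p)" using Suc.IH lenp cTp by simp
  from gap[OF pq nt this pq order_refl] 
  have "min d (s ?p + sum v {?p..<t (Suc k)}) \<le> s (t (Suc k))" by blast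
  moreover have "d \<le> sum v {?p..<t (Suc k)}" using tSuc by (simp add: atLeastSucLessThan_greaterThanLessThan)
  moreover note s_nonneg[of ?p]
  ultimately have ds: "d \<le> s (t (Suc k))" by (simp add: min_def split: if_splits)
  hence "cT (t (Suc k)) < length (L (t (Suc k)))" using dpos by (intro s_pos_nonempty) simp
  thus ?case using ds cT_t by simp
qed

lemma cT_le_len: "cT N \<le> length (L N)"
proof (cases "cT N")
  case 0 then show ?thesis by simp
next
  case (Suc j)
  hence "t j < N" using cT_iff by simp
  hence "length (L (Suc (t j))) \<le> length (L N)" by (intro len_mono) simp
  moreover have "length (L (Suc (t j))) = length (L (t j))" by (simp add: L_Suc add_def)
  ultimately show ?thesis using inv_t[of j] Suc by simp
qed

lemma s_step_le: "s (Suc N) \<le> max (s N) (d + v N)"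
proof (cases "N \<in> range t")
  case True
  then obtain j where j: "N = t j" by auto
  have "cT N < length (L N)" using inv_t[of j] j cT_t by simp
  from s_Suc_T[OF True this] show ?thesis using vpos[of "L N ! cT N"] by simp
next
  case False
  show ?thesis
  proof (cases "add N")
    case True
    then show ?thesis using s_Suc_add[OF True cT_le_len] by (simp add: add_def le_max_iff_disj)
  next
    case f: False
    then show ?thesis using s_Suc_noadd[OF f False] by simp
  qed
qed

definition a :: "nat \<Rightarrow> nat" where "a k = L (t k) ! k"

lemma a_nth: assumes "k < length (L N)" shows "L N ! k = a k"
proof (cases "N \<le> t k")
  case True then show ?thesis unfolding a_def using L_nth_stable assms by simp
next
  case False then show ?thesis unfolding a_def using L_nth_stable[of "t k" N k] inv_t[of k] by simp
qed

lemma a_in: "k < length (L N) \<Longrightarrow> a k \<in> set (L N)"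
  using a_nth by (metis nth_mem)

lemma a_lt_iff: "a k < N \<longleftrightarrow> k < length (L N)"
proof
  assume "k < length (L N)"
  thus "a k < N" using a_in L_lt by blast
next
  assume lt: "a k < N"
  show "k < length (L N)"
  proof (rule ccontr)
    assume "\<not> k < length (L N)"
    hence ge: "length (L N) \<le> k" by simp
    let ?M = "max N (t k)"
    have "k < length (L (t k))" using inv_t by blast
    hence kM: "k < length (L ?M)" using len_mono[of "t k" ?M] by simp
    have "N \<le> L ?M ! k" by (rule L_nth_late[OF _ ge kM]) simp
    thus False using a_nth[OF kM] lt by simp
  qed
qed

lemma a_lt_t: "a k < t k"
  using a_lt_iff inv_t by blast

lemma a_notT: "a k \<notin> range t"
  using a_in inv_t L_notT by blast

lemma a_mono: "strict_mono a"
proof (rule strict_mono_Suc_iff[THEN iffD2], intro allI)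
  fix k
  let ?N = "t (Suc k)"
  have k1: "Suc k < length (L ?N)" using inv_t by blast
  hence k0: "k < length (L ?N)" by simp
  have "L ?N ! k < L ?N ! Suc k" using L_sorted[of ?N] k1 by (simp add: sorted_wrt_iff_nth_less)
  thus "a k < a (Suc k)" using a_nth[OF k0] a_nth[OF k1] by simp
qed

lemma s_eq: "s N = (\<Sum>k\<in>{cT N..<length (L N)}. v (a k))"
  unfolding s_def by (rule sum.cong) (auto simp: a_nth)

lemma add_a: "add (a k) \<and> s (Suc (a k)) = s (a k) + v (a k)"
proof -
  have "k < length (L (Suc (a k)))" using a_lt_iff[of k "Suc (a k)"] by simp
  hence in1: "a k \<in> set (L (Suc (a k)))" by (rule a_in)
  have nin: "a k \<notin> set (L (a k))" using L_lt by blast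
  have ad: "add (a k)"
  proof (rule ccontr)
    assume "\<not> add (a k)"
    hence "L (Suc (a k)) = L (a k)" by (simp add: L_Suc)
    thus False using in1 nin by simp
  qed
  thus ?thesis using s_Suc_add[OF ad cT_le_len] by simp
qed

lemma s_lower: assumes "t k < N" "N \<le> t (Suc k)" shows "d - v (a k) \<le> s N"
proof -
  let ?p = "Suc (t k)"
  have pq: "?p \<le> t (Suc k)" using tSuc by (simp add: Suc_le_eq)
  have nt: "\<And>n. ?p \<le> n \<Longrightarrow> n < t (Suc k) \<Longrightarrow> n \<notin> range t"
    by (auto simp: t_less_iff) (metis Suc_le_lessD not_less_eq t_less_iff)
  have sp: "s ?p = s (t k) - v (a k)"
    using s_Suc_T[of "t k"] inv_t[of k] cT_t a_nth by simp
  from gap[OF pq nt cT_le_len _ assms(2)] assms(1)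
  have "min d (s ?p + sum v {?p..<N}) \<le> s N" by simp
  moreover have "0 \<le> sum v {?p..<N}" by (rule sum_nonneg) (simp add: less_imp_le vpos)
  moreover have "d - v (a k) \<le> s ?p" using sp inv_t[of k] by simp
  moreover have "d - v (a k) \<le> d" using vpos[of "a k"] by simp
  ultimately show ?thesis by (simp add: min_def split: if_splits)
qed

lemma s_upper: assumes "\<forall>n\<ge>K. v n \<le> e" "Suc (a K) \<le> N" shows "s N \<le> d + e"
  using assms(2)
proof (induction N rule: dec_induct)
  case base
  have "a K \<ge> K" using a_mono by (rule seq_suble)
  moreover have "s (a K) < d" "s (Suc (a K)) = s (a K) + v (a K)" using add_a[of K] by (auto simp: add_def)
  ultimately show ?case using assms(1) by fastforce
next
  case (step n)
  have "n \<ge> K" using step seq_suble[OF a_mono, of K] by simp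
  hence "v n \<le> e" using assms by simp
  thus ?case using s_step_le[of n] step by simp
qed

lemma s_lim: "s \<longlonglongrightarrow> d"
proof (rule LIMSEQ_I)
  fix r :: real assume r: "0 < r"
  let ?e = "r / 2"
  have e: "?e > 0" using r by simp
  obtain K where K: "\<forall>n\<ge>K. v n \<le> ?e" using small_eventually[OF e] by blast
  have va: "(v \<circ> a) \<longlonglongrightarrow> 0" using LIMSEQ_subseq_LIMSEQ[OF vlim a_mono] .
  from va e have "eventually (\<lambda>k. dist ((v \<circ> a) k) 0 < ?e) sequentially"
    by (rule tendstoD)
  then obtain K0 where K0: "\<forall>k\<ge>K0. v (a k) < ?e" using vpos by (auto simp: eventually_sequentially dist_real_def abs_of_pos)
  show "\<exists>no. \<forall>n\<ge>no. norm (s n - d) < r"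
  proof (intro exI allI impI)
    fix N assume N: "max (Suc (t K0)) (Suc (a K)) \<le> N"
    have N1: "Suc (t K0) \<le> N" and N2: "Suc (a K) \<le> N" using N by (simp_all only: max.bounded_iff)
    have up: "s N \<le> d + ?e" using s_upper[OF K N2] .
    have "t K0 < N" using N1 by (simp only: Suc_le_eq)
    hence "K0 < cT N" using cT_iff[of K0 N] by blast
    then obtain j where j: "cT N = Suc j" "K0 \<le> j" by (cases "cT N") auto
    have "t j < N" using j cT_iff[of j N] by simp
    moreover have "N \<le> t (Suc j)" using j cT_iff[of "Suc j" N] by simp
    ultimately have "d - v (a j) \<le> s N" by (rule s_lower)
    moreover have "v (a j) < ?e" using K0 j(2) by blast
    ultimately have "d - ?e \<le> s N" by linarith
    thus "norm (s N - d) < r" using up r by (simp add: abs_le_iff)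
  qed
qed

definition tau :: "nat \<Rightarrow> nat" where
  "tau n = (if n \<in> range a then t (inv a n) else if n \<in> range t then a (inv t n) else n)"

lemma a_inj: "inj a" using a_mono by (rule strict_mono_imp_inj_on)
lemma t_inj': "inj t" using t_mono by (rule strict_mono_imp_inj_on)

lemma tau_a: "tau (a k) = t k"
  unfolding tau_def using a_inj by simp

lemma tau_t: "tau (t k) = a k"
proof -
  have "t k \<notin> range a" using a_notT by (metis imageE rangeI)
  thus ?thesis unfolding tau_def using t_inj' by simp
qed

lemma tau_other: "n \<notin> range a \<Longrightarrow> n \<notin> range t \<Longrightarrow> tau n = n"
  unfolding tau_def by simp

lemma tau_tau: "tau (tau n) = n"
proof -
  consider (A) k where "n = a k" | (T) k where "n = t k" | (O) "n \<notin> range a" "n \<notin> range t" by blast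
  then show ?thesis
    by cases (auto simp: tau_a tau_t tau_other)
qed

lemma tau_bij: "bij tau"
  by (rule o_bij[of tau tau]) (auto simp: tau_tau)

definition KS :: "nat \<Rightarrow> nat set" where "KS N = {k. a k < N \<and> N \<le> t k}"

lemma KS_eq: "KS N = {cT N..<length (L N)}"
  unfolding KS_def using a_lt_iff cT_iff by (auto simp: not_less[symmetric])

lemma KS_finite: "finite (KS N)" by (simp add: KS_eq)

lemma KS_mem: "k \<in> KS N \<longleftrightarrow> a k < N \<and> N \<le> t k"
  by (simp add: KS_def)

lemma psum: "(\<Sum>n<N. v n - v (tau n)) = (\<Sum>k\<in>KS N. v (a k) - v (t k))"
proof (induction N)
  case 0 then show ?case by (simp add: KS_def)
next
  case (Suc N)
  consider (A) k where "N = a k" | (T) k where "N = t k" | (O) "N \<notin> range a" "N \<notin> range t" by blast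
  then show ?case
  proof cases
    case A
    have e1: "KS (Suc N) = insert k (KS N)"
    proof (intro set_eqI iffI)
      fix j assume "j \<in> KS (Suc N)"
      hence j: "a j < Suc N" "Suc N \<le> t j" by (simp_all add: KS_mem)
      show "j \<in> insert k (KS N)"
      proof (cases "a j = N")
        case True then have "j = k" using A a_inj by (simp add: inj_eq)
        then show ?thesis by simp
      next
        case False then show ?thesis using j by (simp add: KS_mem less_Suc_eq)
      qed
    next
      fix j assume "j \<in> insert k (KS N)"
      then show "j \<in> KS (Suc N)"
      proof
        assume "j = k" then show ?thesis using A a_lt_t[of k] by (simp add: KS_mem)
      next
        assume "j \<in> KS N"
        hence j: "a j < N" "N \<le> t j" by (simp_all add: KS_mem)
        moreover have "N \<noteq> t j" using A a_notT by (metis rangeI)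
        ultimately show ?thesis by (simp add: KS_mem)
      qed
    qed
    have e2: "k \<notin> KS N" using A by (simp add: KS_mem)
    have "(\<Sum>k\<in>KS (Suc N). v (a k) - v (t k)) = (v (a k) - v (t k)) + (\<Sum>k\<in>KS N. v (a k) - v (t k))"
      unfolding e1 using e2 KS_finite by simp
    then show ?thesis using Suc A by (simp add: tau_a)
  next
    case T
    have e1: "KS N = insert k (KS (Suc N))"
    proof (intro set_eqI iffI)
      fix j assume "j \<in> KS N"
      hence j: "a j < N" "N \<le> t j" by (simp_all add: KS_mem)
      show "j \<in> insert k (KS (Suc N))"
      proof (cases "t j = N")
        case True then have "j = k" using T t_inj by simp
        then show ?thesis by simp
      next
        case False
        hence "Suc N \<le> t j" using j by simp
        then show ?thesis using j by (simp add: KS_mem)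
      qed
    next
      fix j assume "j \<in> insert k (KS (Suc N))"
      then show "j \<in> KS N"
      proof
        assume "j = k" then show ?thesis using T a_lt_t[of k] by (simp add: KS_mem)
      next
        assume "j \<in> KS (Suc N)"
        hence j: "a j < Suc N" "Suc N \<le> t j" by (simp_all add: KS_mem)
        moreover have "a j \<noteq> N" using T a_notT by (metis rangeI)
        ultimately show ?thesis by (simp add: KS_mem less_Suc_eq)
      qed
    qed
    have e2: "k \<notin> KS (Suc N)" using T by (simp add: KS_mem)
    have "(\<Sum>k\<in>KS N. v (a k) - v (t k)) = (v (a k) - v (t k)) + (\<Sum>k\<in>KS (Suc N). v (a k) - v (t k))"
      unfolding e1 using e2 KS_finite by simp
    then show ?thesis using Suc T by (simp add: tau_t)
  next
    case O
    have "KS (Suc N) = KS N"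
    proof (intro set_eqI)
      fix j
      have "a j \<noteq> N" "t j \<noteq> N" using O by auto
      then show "j \<in> KS (Suc N) \<longleftrightarrow> j \<in> KS N" by (auto simp: KS_mem less_Suc_eq Suc_le_eq le_less)
    qed
    then show ?thesis using Suc O by (simp add: tau_other)
  qed
qed

lemma geom: "(\<Sum>k\<in>{c..<m}. (1/2::real)^k) \<le> 2 * (1/2)^c"
proof (cases "c \<le> m")
  case True
  have "(\<Sum>k\<in>{c..<m}. (1/2::real)^k) = 2 * (1/2)^c - 2 * (1/2)^m"
    using True by (induction m rule: dec_induct) auto
  then show ?thesis by simp
next
  case False then show ?thesis by simp
qed

lemma cT_tends: "filterlim cT at_top sequentially"
  unfolding filterlim_at_top eventually_sequentially
proof
  fix k :: nat
  show "\<exists>N. \<forall>n\<ge>N. k \<le> cT n"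
  proof (intro exI allI impI)
    fix n assume "Suc (t k) \<le> n"
    hence "t k < n" by simp
    thus "k \<le> cT n" using cT_iff by (simp add: less_imp_le)
  qed
qed

lemma tail_lim: "(\<lambda>N. \<Sum>k\<in>KS N. v (t k)) \<longlonglongrightarrow> 0"
proof (rule tendsto_sandwich[of "\<lambda>_. 0" _ _ "\<lambda>N. 2 * (1/2::real)^(cT N)"])
  show "\<forall>\<^sub>F N in sequentially. 0 \<le> (\<Sum>k\<in>KS N. v (t k))"
    by (intro always_eventually allI sum_nonneg) (simp add: less_imp_le vpos)
  show "\<forall>\<^sub>F N in sequentially. (\<Sum>k\<in>KS N. v (t k)) \<le> 2 * (1/2::real)^(cT N)"
  proof (intro always_eventually allI)
    fix N
    have "(\<Sum>k\<in>KS N. v (t k)) \<le> (\<Sum>k\<in>KS N. (1/2::real)^k)"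
      by (rule sum_mono) (rule t_small)
    also have "\<dots> \<le> 2 * (1/2)^(cT N)" unfolding KS_eq by (rule geom)
    finally show "(\<Sum>k\<in>KS N. v (t k)) \<le> 2 * (1/2::real)^(cT N)" .
  qed
  show "(\<lambda>_. 0::real) \<longlonglongrightarrow> 0" by simp
  have "(\<lambda>N. (1/2::real)^(cT N)) \<longlonglongrightarrow> 0"
    by (rule filterlim_compose[OF LIMSEQ_power_zero cT_tends]) simp
  from tendsto_mult[OF tendsto_const this, of 2] show "(\<lambda>N. 2 * (1/2::real)^(cT N)) \<longlonglongrightarrow> 0" by simp
qed

lemma tau_sums: "(\<lambda>n. v n - v (tau n)) sums d"
proof -
  have eq: "(\<Sum>n<N. v n - v (tau n)) = s N - (\<Sum>k\<in>KS N. v (t k))" for N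
    unfolding psum s_eq KS_eq[symmetric] by (simp add: sum_subtractf)
  have "(\<lambda>N. s N - (\<Sum>k\<in>KS N. v (t k))) \<longlonglongrightarrow> d - 0"
    by (rule tendsto_diff[OF s_lim tail_lim])
  thus ?thesis unfolding sums_def eq by simp
qed

end

lemma lemmaA:
  fixes v :: "nat \<Rightarrow> real"
  assumes "\<And>n. v n > 0" "v \<longlonglongrightarrow> 0" "\<not> summable v" "d > 0"
  shows "\<exists>\<tau>. bij \<tau> \<and> (\<lambda>n. v n - v (\<tau> n)) sums d"
proof -
  interpret lemA v d using assms by unfold_locales
  show ?thesis using tau_bij tau_sums by blast
qed


lemma bij_tends:
  fixes \<sigma> :: "nat \<Rightarrow> nat" assumes "bij \<sigma>"
  shows "filterlim \<sigma> at_top sequentially"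
  unfolding filterlim_at_top eventually_sequentially
proof
  fix M :: nat
  have inj: "inj \<sigma>" using assms by (simp add: bij_def)
  have "finite (\<sigma> -` {..<M})" by (rule finite_vimageI) (use inj in auto)
  then obtain B where B: "\<forall>n\<in>\<sigma> -` {..<M}. n < B" using finite_nat_set_iff_bounded[of "\<sigma> -` {..<M}"] by auto
  show "\<exists>N. \<forall>n\<ge>N. M \<le> \<sigma> n"
  proof (intro exI allI impI)
    fix n assume "B \<le> n"
    hence "n \<notin> \<sigma> -` {..<M}" using B by (meson leD)
    thus "M \<le> \<sigma> n" by simp
  qed
qed

lemma bij_summable:
  fixes \<sigma> :: "nat \<Rightarrow> nat" and x :: "nat \<Rightarrow> real"
  assumes "bij \<sigma>" "\<And>n. 0 \<le> x n" "summable (\<lambda>n. x (\<sigma> n))"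
  shows "summable x"
proof (rule summableI_nonneg_bounded[OF assms(2)])
  fix N
  let ?F = "\<sigma> -` {..<N}"
  have inj: "inj \<sigma>" using assms by (simp add: bij_def)
  have fin: "finite ?F" by (rule finite_vimageI) (use inj in auto)
  have im: "\<sigma> ` ?F = {..<N}" using assms(1) by (auto simp: bij_def surj_def)
  have "sum x {..<N} = sum x (\<sigma> ` ?F)" using im by simp
  also have "\<dots> = sum (\<lambda>n. x (\<sigma> n)) ?F" by (rule sum.reindex_cong[OF inj_on_subset[OF inj subset_UNIV] refl]) simp
  also have "\<dots> \<le> suminf (\<lambda>n. x (\<sigma> n))" by (rule sum_le_suminf[OF assms(3) fin]) (simp add: assms(2))
  finally show "sum x {..<N} \<le> suminf (\<lambda>n. x (\<sigma> n))" .
qed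

theorem mainTheorem7:
  fixes x :: "nat \<Rightarrow> real"
  assumes pos: "\<And>n. x n > 0"
    and div: "\<not> summable x"
    and lim: "x \<longlonglongrightarrow> 0"
  defines "S \<equiv> {s. \<exists>\<sigma>. bij \<sigma> \<and> (\<lambda>n. x n - x (\<sigma> n)) sums s}"
  shows "S = UNIV \<or> (\<exists>c. S = {c..} \<or> S = {c<..})"
proof -
  have zero: "0 \<in> S" unfolding S_def by (rule CollectI, rule exI[of _ id]) simp
  have up: "y \<in> S" if "z \<in> S" "z \<le> y" for z y :: real
  proof (cases "z = y")
    case True then show ?thesis using that by simp
  next
    case False
    hence dpos: "y - z > 0" using that by simp
    from that(1) obtain \<sigma> where \<sigma>: "bij \<sigma>" "(\<lambda>n. x n - x (\<sigma> n)) sums z" unfolding S_def by blast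
    let ?v = "\<lambda>n. x (\<sigma> n)"
    have vpos: "\<And>n. ?v n > 0" using pos by simp
    have vlim: "?v \<longlonglongrightarrow> 0" using filterlim_compose[OF lim bij_tends[OF \<sigma>(1)]] by (simp add: o_def)
    have vdiv: "\<not> summable ?v" using bij_summable[OF \<sigma>(1)] pos div by (meson less_imp_le)
    obtain \<tau> where \<tau>: "bij \<tau>" "(\<lambda>n. ?v n - ?v (\<tau> n)) sums (y - z)"
      using lemmaA[of ?v "y - z", OF vpos vlim vdiv dpos] by blast
    have "(\<lambda>n. (x n - x (\<sigma> n)) + (?v n - ?v (\<tau> n))) sums (z + (y - z))"
      by (rule sums_add[OF \<sigma>(2) \<tau>(2)])
    hence "(\<lambda>n. x n - x ((\<sigma> \<circ> \<tau>) n)) sums y" by simp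
    moreover have "bij (\<sigma> \<circ> \<tau>)" using \<sigma>(1) \<tau>(1) by (rule bij_comp[rotated])
    ultimately show ?thesis unfolding S_def by blast
  qed
  show ?thesis
  proof (cases "bdd_below S")
    case False
    have "y \<in> S" for y :: real
    proof -
      have "\<exists>z\<in>S. z < y" using False unfolding bdd_below_def by (metis not_le)
      then show "y \<in> S" using up by (meson less_imp_le)
    qed
    hence "S = UNIV" by auto
    then show ?thesis by simp
  next
    case True
    have ne: "S \<noteq> {}" using zero by blast
    let ?c = "Inf S"
    show ?thesis
    proof (cases "?c \<in> S")
      case True
      have "S = {?c..}"
        using up True cInf_lower[OF _ \<open>bdd_below S\<close>] by auto
      then show ?thesis by blast
    next
      case False
      have "S = {?c<..}"
      proof (intro set_eqI iffI)
        fix y assume "y \<in> S"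
        thus "y \<in> {?c<..}" using cInf_lower[OF _ \<open>bdd_below S\<close>] False by (metis greaterThan_iff order_le_less)
      next
        fix y assume "y \<in> {?c<..}"
        hence "\<exists>z\<in>S. z < y" using cInf_less_iff[OF ne \<open>bdd_below S\<close>] by simp
        thus "y \<in> S" using up by (meson less_imp_le)
      qed
      then show ?thesis by blast
    qed
  qed
qed

end
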